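(* Let $M$ be a compact connected boundaryless manifold, $X\in\mathfrak{X}^1(M)$ with flow $(X^t)_{t\in\mathbb{R}}$, and let $\Lambda=\bigcap_{t\in\mathbb{R}}X^t(U)$ be a compact isolated proper subset of $M$ with isolating neighborhood $U$. If $\Lambda$ is not future chaotic, then $\Lambda^-_X(U):=\overline{\bigcap_{t>0}X^{-t}(U)}$ has non-empty interior. Likewise, if $\Lambda$ is not past chaotic, then $\Lambda^+_X(U):=\overline{\bigcap_{t>0}X^{t}(U)}$ has non-empty interior.
   Context: $M$ carries a Riemannian metric with distance $\operatorname{dist}$. A compact $X^t$-invariant set $\Lambda$ is isolated with isolating neighborhood $U$ if $U$ is a neighborhood of $\Lambda$ with $\Lambda=\bigcap_{t\in\mathbb{R}}X^t(U)$; it is proper if $\emptyset\neq\Lambda\neq M$. An invariant set $\Lambda$ is future chaotic with constant $r>0$ if for every $x\in\Lambda$ and every neighborhood $V$ of $x$ in $M$ there exist $y\in V$ and $t>0$ with $\operatorname{dist}(X^t(y),X^t(x))\ge r$; "future chaotic" means future chaotic with some constant $r>0$. $\Lambda$ is past chaotic (with constant $r$) if it is future chaotic (with constant $r$) for the flow generated by $-X$. *)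

theory Defs
  imports "HOL-Analysis.Analysis"
begin

text \<open>The ambient space M is the universe of a type 'm.\<close>

definition boundaryless_manifold_of_dim :: "'m::metric_space set \<Rightarrow> 'n::euclidean_space itself \<Rightarrow> bool" where
  "boundaryless_manifold_of_dim M _ \<longleftrightarrow>
     (\<forall>x\<in>M. \<exists>W. open W \<and> x \<in> W \<and> W \<subseteq> M \<and> (\<exists>V::'n set. open V \<and> W homeomorphic V))"

definition is_flow :: "(real \<Rightarrow> 'm::metric_space \<Rightarrow> 'm) \<Rightarrow> bool" where
  "is_flow \<phi> \<longleftrightarrow> (\<forall>x. \<phi> 0 x = x) \<and> (\<forall>s t x. \<phi> (s + t) x = \<phi> s (\<phi> t x))
     \<and> continuous_on UNIV (\<lambda>p. \<phi> (fst p) (snd p))"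

definition invariant_set :: "(real \<Rightarrow> 'm \<Rightarrow> 'm) \<Rightarrow> 'm set \<Rightarrow> bool" where
  "invariant_set \<phi> L \<longleftrightarrow> (\<forall>t. \<phi> t ` L = L)"

definition isolated_with :: "(real \<Rightarrow> 'm::metric_space \<Rightarrow> 'm) \<Rightarrow> 'm set \<Rightarrow> 'm set \<Rightarrow> bool" where
  "isolated_with \<phi> L U \<longleftrightarrow> compact L \<and> invariant_set \<phi> L \<and> L \<subseteq> interior U
     \<and> L = (\<Inter>t. \<phi> t ` U)"

definition proper_set :: "'m set \<Rightarrow> bool" where
  "proper_set L \<longleftrightarrow> L \<noteq> {} \<and> L \<noteq> UNIV"

definition future_chaotic_const :: "(real \<Rightarrow> 'm::metric_space \<Rightarrow> 'm) \<Rightarrow> 'm set \<Rightarrow> real \<Rightarrow> bool" where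
  "future_chaotic_const \<phi> L r \<longleftrightarrow>
     (\<forall>x\<in>L. \<forall>V. x \<in> interior V \<longrightarrow> (\<exists>y\<in>V. \<exists>t>0. dist (\<phi> t y) (\<phi> t x) \<ge> r))"

definition future_chaotic :: "(real \<Rightarrow> 'm::metric_space \<Rightarrow> 'm) \<Rightarrow> 'm set \<Rightarrow> bool" where
  "future_chaotic \<phi> L \<longleftrightarrow> (\<exists>r>0. future_chaotic_const \<phi> L r)"

text \<open>The flow of -X is t \<mapsto> X^(-t).\<close>

definition reverse_flow :: "(real \<Rightarrow> 'm \<Rightarrow> 'm) \<Rightarrow> real \<Rightarrow> 'm \<Rightarrow> 'm" where
  "reverse_flow \<phi> t = \<phi> (- t)"

definition past_chaotic :: "(real \<Rightarrow> 'm::metric_space \<Rightarrow> 'm) \<Rightarrow> 'm set \<Rightarrow> bool" where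
  "past_chaotic \<phi> L \<longleftrightarrow> future_chaotic (reverse_flow \<phi>) L"

definition Lambda_minus :: "(real \<Rightarrow> 'm::metric_space \<Rightarrow> 'm) \<Rightarrow> 'm set \<Rightarrow> 'm set" where
  "Lambda_minus \<phi> U = closure (\<Inter>t\<in>{0<..}. \<phi> (- t) ` U)"

definition Lambda_plus :: "(real \<Rightarrow> 'm::metric_space \<Rightarrow> 'm) \<Rightarrow> 'm set \<Rightarrow> 'm set" where
  "Lambda_plus \<phi> U = closure (\<Inter>t\<in>{0<..}. \<phi> t ` U)"

end

theory Submission
  imports Defs
begin

lemma uniform_nbhd:
  fixes L U :: "'m::metric_space set"
  assumes "compact L" "L \<subseteq> interior U"
  obtains r where "r > 0" "\<And>x y. x \<in> L \<Longrightarrow> dist y x < r \<Longrightarrow> y \<in> U"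
proof (cases "L = {} \<or> - interior U = {}")
  case True
  show ?thesis
  proof (rule that[of 1])
    fix x y assume "x \<in> L" "dist y x < 1"
    then show "y \<in> U" using True interior_subset by blast
  qed simp
next
  case False
  let ?f = "\<lambda>z. infdist z (- interior U)"
  have "continuous_on L ?f" by (intro continuous_intros)
  then obtain x0 where x0: "x0 \<in> L" "\<And>z. z \<in> L \<Longrightarrow> ?f x0 \<le> ?f z"
    using continuous_attains_inf[OF assms(1)] False by blast
  have pos: "?f x0 > 0"
  proof -
    have "x0 \<notin> - interior U" using x0 assms(2) by blast
    moreover have "closed (- interior U)" by auto
    ultimately have "?f x0 \<noteq> 0" using False in_closed_iff_infdist_zero[of "- interior U" x0]
      by blast
    then show ?thesis using infdist_nonneg[of x0 "- interior U"] by linarith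
  qed
  show ?thesis
  proof (rule that[OF pos])
    fix x y assume xy: "x \<in> L" "dist y x < ?f x0"
    show "y \<in> U"
    proof (rule ccontr)
      assume "y \<notin> U"
      then have "y \<in> - interior U" using interior_subset by blast
      then have "?f x \<le> dist x y" by (rule infdist_le)
      then show False using x0(2)[OF xy(1)] xy(2) by (simp add: dist_commute)
    qed
  qed
qed

lemma flow_nc_aux:
  fixes \<psi> :: "real \<Rightarrow> 'm::metric_space \<Rightarrow> 'm" and B :: "real \<Rightarrow> 'm set"
  assumes inv: "\<And>t x. x \<in> L \<Longrightarrow> \<psi> t x \<in> L"
    and bk: "\<And>t y. t > 0 \<Longrightarrow> \<psi> t y \<in> U \<Longrightarrow> y \<in> B t"
    and cL: "compact L" and sub: "L \<subseteq> interior U"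
    and nc: "\<not> future_chaotic \<psi> L"
  shows "interior (closure (\<Inter>t\<in>{0<..}. B t)) \<noteq> {}"
proof -
  obtain r where r: "r > 0" "\<And>x y. x \<in> L \<Longrightarrow> dist y x < r \<Longrightarrow> y \<in> U"
    using uniform_nbhd[OF cL sub] by blast
  from nc r(1) obtain x V where xV: "x \<in> L" "x \<in> interior V"
    and cl: "\<And>y t. y \<in> V \<Longrightarrow> t > 0 \<Longrightarrow> dist (\<psi> t y) (\<psi> t x) < r"
    unfolding future_chaotic_def future_chaotic_const_def by (meson not_le)
  have "V \<subseteq> (\<Inter>t\<in>{0<..}. B t)"
  proof (intro subsetI InterI)
    fix y S assume y: "y \<in> V" and S: "S \<in> B ` {0<..}"
    then obtain t where t: "t > 0" "S = B t" by auto
    have "\<psi> t y \<in> U" using r(2)[OF inv[OF xV(1)] cl[OF y t(1)]] .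
    then show "y \<in> S" using bk[OF t(1)] t(2) by simp
  qed
  then have "interior V \<subseteq> interior (closure (\<Inter>t\<in>{0<..}. B t))"
    by (meson closure_subset interior_mono order_trans)
  then show ?thesis using xV(2) by blast
qed

theorem lemma3p1:
  fixes \<phi> :: "real \<Rightarrow> 'm::metric_space \<Rightarrow> 'm"
    and L U :: "'m set"
  assumes "compact (UNIV :: 'm set)"
    and "connected (UNIV :: 'm set)"
    and "boundaryless_manifold_of_dim (UNIV :: 'm set) TYPE('n::euclidean_space)"
    and "is_flow \<phi>"
    and "isolated_with \<phi> L U"
    and "proper_set L"
  shows "(\<not> future_chaotic \<phi> L \<longrightarrow> interior (Lambda_minus \<phi> U) \<noteq> {})
       \<and> (\<not> past_chaotic \<phi> L \<longrightarrow> interior (Lambda_plus \<phi> U) \<noteq> {})"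
proof -
  have f0: "\<And>x. \<phi> 0 x = x" and fa: "\<And>s t x. \<phi> (s + t) x = \<phi> s (\<phi> t x)"
    using assms(4) unfolding is_flow_def by auto
  have cL: "compact L" and sub: "L \<subseteq> interior U" and inv: "\<And>t. \<phi> t ` L = L"
    using assms(5) unfolding isolated_with_def invariant_set_def by blast+
  have inv1: "\<And>t x. x \<in> L \<Longrightarrow> \<phi> t x \<in> L"
  proof -
    fix t x assume "x \<in> L"
    then have "\<phi> t x \<in> \<phi> t ` L" by (rule imageI)
    then show "\<phi> t x \<in> L" using inv[of t] by simp
  qed
  have inv2: "\<And>t x. x \<in> L \<Longrightarrow> reverse_flow \<phi> t x \<in> L"
    using inv1 unfolding reverse_flow_def by blast
  have b1: "y \<in> \<phi> (- t) ` U" if "\<phi> t y \<in> U" for t y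
  proof -
    have "\<phi> (- t) (\<phi> t y) = y" using fa[of "-t" t y] f0 by simp
    then show ?thesis using that by (metis image_eqI)
  qed
  have b2: "y \<in> \<phi> t ` U" if "reverse_flow \<phi> t y \<in> U" for t y
  proof -
    have "\<phi> t (\<phi> (-t) y) = y" using fa[of t "-t" y] f0 by simp
    then show ?thesis using that unfolding reverse_flow_def by (metis image_eqI)
  qed
  show ?thesis
    unfolding Lambda_minus_def Lambda_plus_def past_chaotic_def
    using flow_nc_aux[of L \<phi> U "\<lambda>t. \<phi> (- t) ` U", OF inv1 b1 cL sub]
      flow_nc_aux[of L "reverse_flow \<phi>" U "\<lambda>t. \<phi> t ` U", OF inv2 b2 cL sub] by blast
qed

end
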